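(* Let $V$ and $Q$ be real Hilbert spaces, $f \in V'$, $g \in Q'$, and let $a : V \times V \to \mathbb{R}$ and $b : V \times Q \to \mathbb{R}$ be bilinear forms with $|a(u,v)| \leq \|a\| \|u\|_V \|v\|_V$ and $|b(v,q)| \leq \|b\| \|v\|_V \|q\|_Q$ for all $u,v \in V$, $q \in Q$. Let $B : V \to Q'$ be defined by $\langle Bv, q\rangle_{Q' \times Q} = b(v,q)$ and let $K := \{ v \in V : b(v,q) = 0 \text{ for all } q \in Q\}$. Assume $\operatorname{Range} B = Q'$, and let $\beta > 0$ be a constant with $$\beta \leq \inf_{q \in Q\setminus\{0\}} \sup_{v \in V \setminus\{0\}} \frac{b(v,q)}{\|v\|_V \|q\|_Q}.$$ Assume moreover that $a$ is symmetric, $a(u,v) = a(v,u)$ for all $u,v \in V$, and coercive: there is $\alpha > 0$ with $a(u,u) \geq \alpha\|u\|_V^2$ for all $u \in V$; and let $\alpha_0 \geq \alpha$ be a constant with $a(u,u) \geq \alpha_0 \|u\|_V^2$ for all $u \in K$. Let $(u,p) \in V \times Q$ be the solution of $$a(u,v) + b(v,p) = \langle f, v\rangle_{V' \times V} \ \text{for all } v \in V, \qquad b(u,q) = \langle g, q \rangle_{Q' \times Q} \ \text{for all } q \in Q.$$ Then $$\|u\|_V \leq \frac{1}{\alpha_0}\|f\|_{K'} + \frac{1}{\beta}\Big(\frac{\|a\|}{\alpha}\Big)^{1/2}\|g\|_{Q'},$$ $$\|p\|_Q \leq \frac{1}{\beta}\|f \circ \Pi_{K_a^\perp}\|_{V'}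 + \frac{\|a\|}{\beta^2}\|g\|_{Q'} \leq \frac{1}{\beta}\Big(\frac{\|a\|}{\alpha}\Big)^{1/2}\|f\|_{(K_a^\perp)'} + \frac{\|a\|}{\beta^2}\|g\|_{Q'}.$$
   Context: For $f \in V'$, $\|f\|_{V'} := \sup_{v \in V\setminus\{0\}} |\langle f, v\rangle_{V'\times V}| / \|v\|_V$. For a closed subspace $U \subset V$, $\|f\|_{U'} := \sup_{v \in U \setminus\{0\}} |\langle f, v\rangle_{V' \times V}| / \|v\|_V$ (a semi norm on $V'$ in general). Since $a$ is a scalar product on $V$, define $K_a^\perp := \{ v \in V : a(v, w) = 0 \text{ for all } w \in K\}$; $\Pi_K : V \to K$ is the $a$-orthogonal projection onto $K$ (i.e. $a(\Pi_K v - v, w) = 0$ for all $v \in V$, $w \in K$), and $\Pi_{K_a^\perp} := I - \Pi_K$. $f \circ \Pi_{K_a^\perp} \in V'$ is the functional $v \mapsto \langle f, \Pi_{K_a^\perp} v\rangle_{V' \times V}$. $\|a\|$ denotes a continuity constant of $a$ as in the claim. *)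

theory Defs
  imports "HOL-Analysis.Analysis"
begin

definition dual_seminorm :: "'v::real_normed_vector set \<Rightarrow> ('v \<Rightarrow> real) \<Rightarrow> real" where
  "dual_seminorm U f = Sup (insert 0 ((\<lambda>v. \<bar>f v\<bar> / norm v) ` (U - {0})))"

definition kernel_b :: "('v \<Rightarrow> 'q \<Rightarrow> real) \<Rightarrow> 'v set" where
  "kernel_b b = {v. \<forall>q. b v q = 0}"

definition a_orth :: "('v \<Rightarrow> 'v \<Rightarrow> real) \<Rightarrow> 'v set \<Rightarrow> 'v set" where
  "a_orth a K = {v. \<forall>w\<in>K. a v w = 0}"

definition a_proj :: "('v::real_vector \<Rightarrow> 'v \<Rightarrow> real) \<Rightarrow> 'v set \<Rightarrow> 'v \<Rightarrow> 'v" where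
  "a_proj a K v = (THE w. w \<in> K \<and> (\<forall>z\<in>K. a (w - v) z = 0))"

definition a_proj_perp :: "('v::real_vector \<Rightarrow> 'v \<Rightarrow> real) \<Rightarrow> 'v set \<Rightarrow> 'v \<Rightarrow> 'v" where
  "a_proj_perp a K v = v - a_proj a K v"

end

theory Submission
  imports Defs
begin


locale cform =
  fixes c :: "'v::{real_normed_vector, complete_space} \<Rightarrow> 'v \<Rightarrow> real" and C \<gamma> :: real
  assumes lin1: "\<And>v. linear (\<lambda>u. c u v)" and lin2: "\<And>u. linear (c u)"
    and sym: "\<And>u v. c u v = c v u"
    and bnd: "\<And>u v. \<bar>c u v\<bar> \<le> C * norm u * norm v"
    and coer: "\<And>u. c u u \<ge> \<gamma> * (norm u)\<^sup>2" and gpos: "\<gamma> > 0"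
begin

lemma add1: "c (x + y) z = c x z + c y z" using linear_add[OF lin1[of z]] by simp
lemma add2: "c z (x + y) = c z x + c z y" using linear_add[OF lin2[of z]] by simp
lemma diff1: "c (x - y) z = c x z - c y z" using linear_diff[OF lin1[of z]] by simp
lemma diff2: "c z (x - y) = c z x - c z y" using linear_diff[OF lin2[of z]] by simp
lemma scale1: "c (t *\<^sub>R x) z = t * c x z" using linear_scale[OF lin1[of z]] by simp
lemma scale2: "c z (t *\<^sub>R x) = t * c z x" using linear_scale[OF lin2[of z]] by simp
lemma zero1[simp]: "c 0 z = 0" using linear_0[OF lin1[of z]] by simp
lemma zero2[simp]: "c z 0 = 0" using linear_0[OF lin2[of z]] by simp

lemmas cs = add1 add2 diff1 diff2 scale1 scale2

lemma nonneg: "c u u \<ge> 0"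
  by (rule order_trans[OF _ coer]) (use gpos in simp)

lemma pos: "u \<noteq> 0 \<Longrightarrow> c u u > 0"
  by (rule less_le_trans[OF _ coer]) (use gpos in simp)

lemma bb: "bounded_bilinear c"
proof
  show "\<exists>K. \<forall>a b. norm (c a b) \<le> norm a * norm b * K"
    using bnd by (intro exI[of _ C]) (auto simp: mult_ac)
qed (auto simp: cs)

lemma expand: "c (x + y) (x + y) = c x x + 2 * c x y + c y y"
  by (simp add: cs sym[of y x])

lemma expand_diff: "c (x - y) (x - y) = c x x - 2 * c x y + c y y"
  by (simp add: cs sym[of y x])

lemma cauchy_schwarz: "(c x y)\<^sup>2 \<le> c x x * c y y"
proof (cases "y = 0")
  case True then show ?thesis by simp
next
  case False
  define t where "t = c x y / c y y"
  have py: "c y y > 0" using pos False by simp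
  have "0 \<le> c (x - t *\<^sub>R y) (x - t *\<^sub>R y)" by (rule nonneg)
  also have "\<dots> = c x x - 2 * t * c x y + t * t * c y y"
    by (simp add: cs sym[of y x] algebra_simps)
  also have "\<dots> = c x x - (c x y)\<^sup>2 / c y y"
    using py by (simp add: t_def power2_eq_square field_simps)
  finally show ?thesis using py by (simp add: field_simps)
qed

lemma proj_exists:
  assumes M: "subspace M" "closed M"
  shows "\<exists>w\<in>M. \<forall>z\<in>M. c (w - v) z = 0"
proof -
  define Q where "Q = (\<lambda>m. c (v - m) (v - m))"
  define d where "d = Inf (Q ` M)"
  have M0: "0 \<in> M" using M subspace_0 by blast
  have bdd: "bdd_below (Q ` M)" unfolding Q_def using nonneg by (auto intro!: bdd_belowI)
  have dle: "d \<le> Q m" if "m \<in> M" for m unfolding d_def using bdd that by (intro cInf_lower) auto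
  have "\<exists>m\<in>M. Q m < d + inverse (real (Suc n))" for n
  proof -
    have "Inf (Q ` M) < d + inverse (real (Suc n))" unfolding d_def by simp
    then obtain y where "y \<in> Q ` M" "y < d + inverse (real (Suc n))"
      using cInf_lessD[of "Q ` M"] M0 by blast
    then show ?thesis by auto
  qed
  then obtain ms where ms: "\<And>n. ms n \<in> M" "\<And>n. Q (ms n) < d + inverse (real (Suc n))"
    by metis
  have key: "\<gamma> * (norm (ms n - ms k))\<^sup>2 \<le> 2 * inverse (real (Suc n)) + 2 * inverse (real (Suc k))" for n k
  proof -
    define x where "x = v - ms n"
    define y where "y = v - ms k"
    define mid where "mid = (1/2) *\<^sub>R (ms n + ms k)"
    have midM: "mid \<in> M" unfolding mid_def using M ms(1)
      by (simp add: subspace_add subspace_scale)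
    have xy: "x + y = 2 *\<^sub>R (v - mid)" unfolding x_def y_def mid_def by (simp add: algebra_simps scaleR_2)
    have "c (x + y) (x + y) = 4 * Q mid" unfolding xy Q_def by (simp add: cs)
    then have h1: "c (x + y) (x + y) \<ge> 4 * d" using dle[OF midM] by simp
    have par: "c (x - y) (x - y) + c (x + y) (x + y) = 2 * c x x + 2 * c y y"
      by (simp add: expand expand_diff)
    have xmy: "x - y = ms k - ms n" unfolding x_def y_def by simp
    have "\<gamma> * (norm (ms n - ms k))\<^sup>2 = \<gamma> * (norm (x - y))\<^sup>2" unfolding xmy by (simp add: norm_minus_commute)
    also have "\<dots> \<le> c (x - y) (x - y)" by (rule coer)
    also have "\<dots> \<le> 2 * Q (ms n) + 2 * Q (ms k) - 4 * d" using par h1 unfolding Q_def x_def y_def by linarith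
    also have "\<dots> \<le> 2 * inverse (real (Suc n)) + 2 * inverse (real (Suc k))"
      using ms(2)[of n] ms(2)[of k] by linarith
    finally show ?thesis .
  qed
  have "Cauchy ms"
  proof (rule metric_CauchyI)
    fix e :: real assume e: "e > 0"
    obtain N :: nat where N: "inverse (real (Suc N)) < \<gamma> * e\<^sup>2 / 4"
      using reals_Archimedean[of "\<gamma> * e\<^sup>2 / 4"] gpos e by auto
    show "\<exists>N. \<forall>m\<ge>N. \<forall>n\<ge>N. dist (ms m) (ms n) < e"
    proof (intro exI allI impI)
      fix m n assume mn: "m \<ge> N" "n \<ge> N"
      have i1: "inverse (real (Suc m)) \<le> inverse (real (Suc N))" using mn by (simp add: le_imp_inverse_le)
      have i2: "inverse (real (Suc n)) \<le> inverse (real (Suc N))" using mn by (simp add: le_imp_inverse_le)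
      have "\<gamma> * (norm (ms m - ms n))\<^sup>2 < \<gamma> * e\<^sup>2" using key[of m n] i1 i2 N by linarith
      then have "(norm (ms m - ms n))\<^sup>2 < e\<^sup>2" using gpos by simp
      then have "norm (ms m - ms n) < e" using e by (simp add: power_less_imp_less_base)
      then show "dist (ms m) (ms n) < e" by (simp add: dist_norm)
    qed
  qed
  then obtain m where lim: "ms \<longlonglongrightarrow> m" using Cauchy_convergent_iff convergent_def by blast
  have mM: "m \<in> M" using closed_sequentially[OF M(2) ms(1) lim] .
  have l1: "(\<lambda>n. Q (ms n)) \<longlonglongrightarrow> Q m" unfolding Q_def
    by (intro bounded_bilinear.tendsto[OF bb] tendsto_diff tendsto_const lim)
  have l2: "(\<lambda>n. d + inverse (real (Suc n))) \<longlonglongrightarrow> d + 0"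
    by (intro tendsto_add tendsto_const LIMSEQ_inverse_real_of_nat)
  have Qm: "Q m \<le> d" using LIMSEQ_le[OF l1 l2] ms(2) less_imp_le by auto
  show ?thesis
  proof (intro bexI[OF _ mM] ballI)
    fix z assume zM: "z \<in> M"
    define e where "e = c (v - m) z"
    show "c (m - v) z = 0"
    proof (cases "z = 0")
      case True then show ?thesis by simp
    next
      case False
      have pz: "c z z > 0" using pos False by simp
      define t where "t = e / c z z"
      have "m + t *\<^sub>R z \<in> M" using M zM mM by (simp add: subspace_add subspace_scale)
      then have "d \<le> Q (m + t *\<^sub>R z)" by (rule dle)
      also have "Q (m + t *\<^sub>R z) = Q m - 2 * t * e + t * t * c z z"
      proof -
        have "v - (m + t *\<^sub>R z) = (v - m) - t *\<^sub>R z" by (simp add: algebra_simps)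
        then show ?thesis unfolding Q_def e_def by (simp only: expand_diff scale1 scale2)
      qed
      finally have "2 * t * e \<le> t * t * c z z" using Qm by linarith
      then have "2 * e * e / c z z \<le> e * e / c z z" using pz by (simp add: t_def field_simps power2_eq_square)
      then have "e * e \<le> 0" using pz by (simp add: field_simps)
      moreover have "e * e \<ge> 0" by simp
      ultimately have "e * e = 0" by linarith
      then have "e = 0" by simp
      then show ?thesis unfolding e_def by (simp add: diff1)
    qed
  qed
qed

lemma riesz:
  assumes phi: "bounded_linear \<phi>"
  shows "\<exists>y. \<forall>v. c v y = \<phi> v"
proof (cases "\<forall>x. \<phi> x = 0")
  case True then show ?thesis by (intro exI[of _ 0]) simp
next
  case False
  then obtain x where x: "\<phi> x \<noteq> 0" by blast
  have lp: "linear \<phi>" using phi by (rule bounded_linear.linear)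
  define N where "N = {v. \<phi> v = 0}"
  have sN: "subspace N" unfolding N_def using lp
    by (auto simp: subspace_def linear_0 linear_add linear_scale)
  have cN: "closed N" unfolding N_def
    by (intro closed_Collect_eq linear_continuous_on phi continuous_on_const)
  obtain w where wN: "w \<in> N" and w: "\<And>z. z \<in> N \<Longrightarrow> c (w - x) z = 0"
    using proj_exists[OF sN cN, of x] by blast
  define y0 where "y0 = x - w"
  have py0: "\<phi> y0 = \<phi> x" using wN lp unfolding y0_def N_def by (simp add: linear_diff)
  have y0nz: "y0 \<noteq> 0" using py0 x lp by (auto simp: linear_0)
  have orth: "c z y0 = 0" if "z \<in> N" for z
    using w[OF that] unfolding y0_def by (simp add: diff1 sym[of z])
  have cy: "c y0 y0 > 0" using pos y0nz by simp
  show ?thesis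
  proof (intro exI allI)
    fix v
    have "v - (\<phi> v / \<phi> y0) *\<^sub>R y0 \<in> N" unfolding N_def using lp py0 x
      by (simp add: linear_diff linear_scale)
    then have "c (v - (\<phi> v / \<phi> y0) *\<^sub>R y0) y0 = 0" by (rule orth)
    then have "c v y0 = (\<phi> v / \<phi> y0) * c y0 y0" by (simp add: cs)
    then show "c v ((\<phi> y0 / c y0 y0) *\<^sub>R y0) = \<phi> v"
      using cy py0 x by (simp add: cs field_simps)
  qed
qed

end


lemma ds_bdd:
  assumes "bounded_linear f"
  shows "bdd_above (insert 0 ((\<lambda>v. \<bar>f v\<bar> / norm v) ` (U - {0})))"
proof (rule bdd_aboveI[of _ "onorm f"])
  fix x assume "x \<in> insert 0 ((\<lambda>v. \<bar>f v\<bar> / norm v) ` (U - {0}))"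
  then show "x \<le> onorm f"
    using le_onorm[OF assms] onorm_pos_le[OF assms] by auto
qed

lemma ds_nonneg: "bounded_linear f \<Longrightarrow> 0 \<le> dual_seminorm U f"
  unfolding dual_seminorm_def by (rule cSup_upper[OF _ ds_bdd]) auto

lemma ds_bound:
  assumes f: "bounded_linear f" and x: "x \<in> U"
  shows "\<bar>f x\<bar> \<le> dual_seminorm U f * norm x"
proof (cases "x = 0")
  case True then show ?thesis using linear_0[OF bounded_linear.linear[OF f]] by simp
next
  case False
  have "\<bar>f x\<bar> / norm x \<le> dual_seminorm U f" unfolding dual_seminorm_def
    by (rule cSup_upper[OF _ ds_bdd[OF f]]) (use x False in auto)
  then show ?thesis using False by (simp add: divide_le_eq)
qed

lemma vec_eq:
  fixes x y :: "'a::real_inner"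
  assumes "\<And>v. inner v x = inner v y" shows "x = y"
proof -
  have "inner (x - y) (x - y) = 0" using assms[of "x - y"] by (simp add: inner_diff_right)
  then show ?thesis by simp
qed

lemma ne_of_mem: "x \<in> A \<Longrightarrow> A \<noteq> {}" by auto

theorem theorem2p4:
  fixes a :: "'v::{real_inner, complete_space} \<Rightarrow> 'v \<Rightarrow> real"
    and b :: "'v \<Rightarrow> 'q::{real_inner, complete_space} \<Rightarrow> real"
    and f :: "'v \<Rightarrow> real" and g :: "'q \<Rightarrow> real"
    and na nb \<alpha> \<alpha>0 \<beta> :: real
    and u :: 'v and p :: 'q
  assumes f_lin: "bounded_linear f" and g_lin: "bounded_linear g"
    and a_lin1: "\<And>v. linear (\<lambda>u. a u v)" and a_lin2: "\<And>u. linear (a u)"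
    and b_lin1: "\<And>q. linear (\<lambda>v. b v q)" and b_lin2: "\<And>v. linear (b v)"
    and a_bnd: "\<And>u v. \<bar>a u v\<bar> \<le> na * norm u * norm v"
    and b_bnd: "\<And>v q. \<bar>b v q\<bar> \<le> nb * norm v * norm q"
    and B_surj: "\<And>h. bounded_linear h \<Longrightarrow> \<exists>v. \<forall>q. b v q = h q"
    and beta_pos: "\<beta> > 0"
    and inf_sup: "\<And>q. q \<noteq> 0 \<Longrightarrow>
                    \<beta> \<le> (SUP v\<in>UNIV - {0}. b v q / (norm v * norm q))"
    and a_sym: "\<And>u v. a u v = a v u"
    and alpha_pos: "\<alpha> > 0"
    and a_coerc: "\<And>u. a u u \<ge> \<alpha> * (norm u)\<^sup>2"
    and alpha0_ge: "\<alpha>0 \<ge> \<alpha>"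
    and a_coerc_K: "\<And>u. u \<in> kernel_b b \<Longrightarrow> a u u \<ge> \<alpha>0 * (norm u)\<^sup>2"
    and eq1: "\<And>v. a u v + b v p = f v"
    and eq2: "\<And>q. b u q = g q"
  shows "norm u \<le> dual_seminorm (kernel_b b) f / \<alpha>0
                    + sqrt (na / \<alpha>) / \<beta> * onorm g
    \<and> norm p \<le> onorm (\<lambda>v. f (a_proj_perp a (kernel_b b) v)) / \<beta>
                    + na / \<beta>\<^sup>2 * onorm g
    \<and> onorm (\<lambda>v. f (a_proj_perp a (kernel_b b) v)) / \<beta> + na / \<beta>\<^sup>2 * onorm g
           \<le> sqrt (na / \<alpha>) / \<beta> * dual_seminorm (a_orth a (kernel_b b)) f
             + na / \<beta>\<^sup>2 * onorm g"
proof -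
  define K where "K = kernel_b b"
  define F where "F = onorm (\<lambda>v. f (a_proj_perp a K v))"
  define G where "G = onorm g"
  define D where "D = dual_seminorm K f"
  define Dp where "Dp = dual_seminorm (a_orth a K) f"
  have lf: "linear f" using f_lin by (rule bounded_linear.linear)
  have lg: "linear g" using g_lin by (rule bounded_linear.linear)
  have G0: "G \<ge> 0" unfolding G_def by (rule onorm_pos_le[OF g_lin])
  have D0: "D \<ge> 0" unfolding D_def by (rule ds_nonneg[OF f_lin])
  have Dp0: "Dp \<ge> 0" unfolding Dp_def by (rule ds_nonneg[OF f_lin])
  have b01: "b 0 q = 0" for q using linear_0[OF b_lin1[of q]] by simp
  have b02: "b v 0 = 0" for v using linear_0[OF b_lin2[of v]] by simp
  show ?thesis
  proof (cases "\<exists>e::'v. e \<noteq> 0")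
    case False
    then have V0: "x = 0" for x :: 'v by blast
    have Q0: "q = 0" for q :: 'q
    proof -
      obtain v where "\<forall>r. b v r = inner q r" using B_surj[OF bounded_linear_inner_right] by blast
      then have "b 0 q = inner q q" using V0[of v] by simp
      then show "q = 0" using b01 by simp
    qed
    have u0: "u = 0" "p = 0" by (rule V0, rule Q0)
    have gz: "g x = 0" for x using Q0[of x] linear_0[OF lg] by simp
    have "G \<le> 0" unfolding G_def
      by (rule onorm_bound) (auto simp: gz)
    then have GG: "G = 0" using G0 by simp
    have fz: "f x = 0" for x using V0[of x] linear_0[OF lf] by simp
    have FF: "F = 0" unfolding F_def by (simp add: fz onorm_zero)
    have "a_orth a K - {0} = {}" using V0 by blast
    then have DpD: "Dp = 0" unfolding Dp_def dual_seminorm_def by (simp only:) simp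
    show ?thesis using GG FF DpD D0 u0 alpha_pos order_trans[OF alpha_pos[THEN less_imp_le] alpha0_ge]
      unfolding K_def[symmetric] F_def[symmetric] G_def[symmetric] D_def[symmetric] Dp_def[symmetric]
      by simp
  next
    case True
    then obtain e :: 'v where e: "e \<noteq> 0" by blast
    have "\<alpha> * (norm e)\<^sup>2 \<le> na * (norm e)\<^sup>2"
      using a_coerc[of e] a_bnd[of e e] by (simp add: power2_eq_square mult_ac)
    then have na_ge: "na \<ge> \<alpha>" using e by simp
    have na0: "na \<ge> 0" using na_ge alpha_pos by simp
    have a0pos: "\<alpha>0 > 0" using alpha_pos alpha0_ge by simp
    interpret A: cform a na \<alpha>
      by (rule cform.intro) (rule a_lin1 a_lin2 a_sym a_bnd a_coerc alpha_pos)+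
    interpret I: cform "inner :: 'v \<Rightarrow> 'v \<Rightarrow> real" 1 1
      by (rule cform.intro) (auto intro: bounded_linear.linear[OF bounded_linear_inner_left]
          bounded_linear.linear[OF bounded_linear_inner_right] simp: Cauchy_Schwarz_ineq2
          power2_norm_eq_inner inner_commute)
    have sK: "subspace K" unfolding K_def kernel_b_def subspace_def
      using b01 linear_add[OF b_lin1] linear_scale[OF b_lin1] by auto
    have blq: "bounded_linear (\<lambda>v. b v q)" for q
    proof (rule bounded_linear_intro[where K="\<bar>nb\<bar> * norm q"])
      show "b (x + y) q = b x q + b y q" for x y using linear_add[OF b_lin1] by simp
      show "b (r *\<^sub>R x) q = r *\<^sub>R b x q" for r x using linear_scale[OF b_lin1] by simp
      fix x
      have "\<bar>b x q\<bar> \<le> nb * norm x * norm q" by (rule b_bnd)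
      also have "\<dots> \<le> \<bar>nb\<bar> * norm x * norm q" by (intro mult_right_mono) auto
      finally show "norm (b x q) \<le> norm x * (\<bar>nb\<bar> * norm q)" by (simp add: mult_ac)
    qed
    have cK: "closed K"
    proof -
      have "K = (\<Inter>q. {v. b v q = 0})" unfolding K_def kernel_b_def by auto
      moreover have "closed {v. b v q = 0}" for q
        by (intro closed_Collect_eq linear_continuous_on blq continuous_on_const)
      ultimately show ?thesis by auto
    qed
    define P where "P = a_proj a K"
    have Pperp_def: "a_proj_perp a K v = v - P v" for v unfolding a_proj_perp_def P_def by simp
    have uniq: "w1 = w2" if "w1 \<in> K" "w2 \<in> K" "\<forall>z\<in>K. a (w1 - v) z = 0" "\<forall>z\<in>K. a (w2 - v) z = 0" for w1 w2 v
    proof -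
      have "w1 - w2 \<in> K" using sK that by (simp add: subspace_diff)
      then have "a (w1 - v) (w1 - w2) - a (w2 - v) (w1 - w2) = 0" using that by simp
      then have "a (w1 - w2) (w1 - w2) = 0" by (simp add: A.cs)
      then show ?thesis using A.pos[of "w1 - w2"] by auto
    qed
    have Pchar: "P v \<in> K \<and> (\<forall>z\<in>K. a (P v - v) z = 0)" for v
    proof -
      have "\<exists>!w. w \<in> K \<and> (\<forall>z\<in>K. a (w - v) z = 0)"
        using A.proj_exists[OF sK cK, of v] uniq by blast
      then show ?thesis unfolding P_def a_proj_def by (rule theI')
    qed
    have PK: "P v \<in> K" for v using Pchar by blast
    have Porth: "z \<in> K \<Longrightarrow> a (P v - v) z = 0" for v z using Pchar by blast
    have Puniq: "w \<in> K \<Longrightarrow> \<forall>z\<in>K. a (w - v) z = 0 \<Longrightarrow> w = P v" for w v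
      using uniq[of w "P v" v] Pchar by blast
    have Padd: "P (x + y) = P x + P y" for x y
    proof (rule Puniq[symmetric])
      show "P x + P y \<in> K" using sK PK by (simp add: subspace_add)
      show "\<forall>z\<in>K. a (P x + P y - (x + y)) z = 0"
      proof
        fix z assume "z \<in> K"
        have "P x + P y - (x + y) = (P x - x) + (P y - y)" by (simp add: algebra_simps)
        then show "a (P x + P y - (x + y)) z = 0" using Porth[OF \<open>z \<in> K\<close>] by (simp add: A.cs)
      qed
    qed
    have Pscale: "P (t *\<^sub>R x) = t *\<^sub>R P x" for t x
    proof (rule Puniq[symmetric])
      show "t *\<^sub>R P x \<in> K" using sK PK by (simp add: subspace_scale)
      show "\<forall>z\<in>K. a (t *\<^sub>R P x - t *\<^sub>R x) z = 0"
      proof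
        fix z assume "z \<in> K"
        have "t *\<^sub>R P x - t *\<^sub>R x = t *\<^sub>R (P x - x)" by (simp add: algebra_simps)
        then show "a (t *\<^sub>R P x - t *\<^sub>R x) z = 0" using Porth[OF \<open>z \<in> K\<close>] by (simp add: A.cs)
      qed
    qed
    define Pp where "Pp = (\<lambda>v. v - P v)"
    have Ppo: "a (Pp v) k = 0" if "k \<in> K" for v k
      using Porth[OF that, of v] unfolding Pp_def by (simp add: A.cs)
    have PpA: "Pp v \<in> a_orth a K" for v unfolding a_orth_def using Ppo by blast
    define \<rho> where "\<rho> = sqrt (na / \<alpha>)"
    have rho0: "\<rho> \<ge> 0" unfolding \<rho>_def using na0 alpha_pos by simp
    have rho2: "\<rho>\<^sup>2 = na / \<alpha>" unfolding \<rho>_def using na0 alpha_pos by simp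
    have Ppn: "norm (Pp v) \<le> \<rho> * norm v" for v
    proof -
      have vv: "v = P v + Pp v" unfolding Pp_def by simp
      have "a v v = a (P v) (P v) + 2 * a (P v) (Pp v) + a (Pp v) (Pp v)"
        by (subst (1 2) vv) (rule A.expand)
      moreover have "a (P v) (Pp v) = 0" using Ppo[OF PK] a_sym by metis
      ultimately have "a (Pp v) (Pp v) \<le> a v v" using A.nonneg[of "P v"] by simp
      also have "\<dots> \<le> na * (norm v)\<^sup>2" using a_bnd[of v v] by (simp add: power2_eq_square mult_ac)
      finally have "\<alpha> * (norm (Pp v))\<^sup>2 \<le> na * (norm v)\<^sup>2" using a_coerc[of "Pp v"] by simp
      then have "(norm (Pp v))\<^sup>2 \<le> (na * (norm v)\<^sup>2) / \<alpha>" using alpha_pos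
        by (simp add: pos_le_divide_eq mult.commute)
      also have "(na * (norm v)\<^sup>2) / \<alpha> = (\<rho> * norm v)\<^sup>2" by (simp add: power_mult_distrib rho2)
      finally have "(norm (Pp v))\<^sup>2 \<le> (\<rho> * norm v)\<^sup>2" .
      then show ?thesis by (rule power2_le_imp_le) (use rho0 in simp)
    qed
    have Ppeq: "a_proj_perp a K = Pp" by (rule ext) (simp add: Pperp_def Pp_def)
    have fPp_bl: "bounded_linear (\<lambda>v. f (Pp v))"
    proof (rule bounded_linear_intro[where K="onorm f * \<rho>"])
      show "f (Pp (x + y)) = f (Pp x) + f (Pp y)" for x y
        unfolding Pp_def Padd by (simp add: linear_add[OF lf] linear_diff[OF lf] algebra_simps)
      show "f (Pp (r *\<^sub>R x)) = r *\<^sub>R f (Pp x)" for r x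
        unfolding Pp_def Pscale by (simp add: linear_scale[OF lf] linear_diff[OF lf] algebra_simps)
      show "norm (f (Pp x)) \<le> norm x * (onorm f * \<rho>)" for x
        using order_trans[OF onorm[OF f_lin] mult_left_mono[OF Ppn onorm_pos_le[OF f_lin]]]
        by (simp add: mult_ac)
    qed
    have FPp: "F = onorm (\<lambda>v. f (Pp v))" unfolding F_def Ppeq ..
    have F0: "F \<ge> 0" unfolding FPp by (rule onorm_pos_le[OF fPp_bl])
    have third: "F \<le> \<rho> * Dp" unfolding FPp
    proof (rule onorm_bound)
      show "0 \<le> \<rho> * Dp" using rho0 Dp0 by simp
      fix x
      have "norm (f (Pp x)) \<le> Dp * norm (Pp x)" unfolding Dp_def using ds_bound[OF f_lin PpA] by simp
      also have "\<dots> \<le> Dp * (\<rho> * norm x)" by (rule mult_left_mono[OF Ppn Dp0])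
      finally show "norm (f (Pp x)) \<le> \<rho> * Dp * norm x" by (simp add: mult_ac)
    qed
    define T where "T = (\<lambda>q. SOME y. \<forall>v. inner v y = b v q)"
    have Tdef: "inner v (T q) = b v q" for v q
    proof -
      have "\<exists>y. \<forall>v. inner v y = b v q" by (rule I.riesz[OF blq])
      then have "\<forall>v. inner v (T q) = b v q" unfolding T_def by (rule someI_ex)
      then show ?thesis by blast
    qed
    have Tadd: "T (q + r) = T q + T r" for q r
      by (rule vec_eq) (simp add: Tdef inner_add_right linear_add[OF b_lin2])
    have Tscale: "T (t *\<^sub>R q) = t *\<^sub>R T q" for t q
      by (rule vec_eq) (simp add: Tdef linear_scale[OF b_lin2])
    have Tnorm: "norm (T q) \<le> \<bar>nb\<bar> * norm q" for q
    proof (cases "T q = 0")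
      case True then show ?thesis by simp
    next
      case False
      have "norm (T q) * norm (T q) = inner (T q) (T q)" by (metis power2_norm_eq_inner power2_eq_square)
      also have "\<dots> = b (T q) q" by (rule Tdef)
      also have "\<dots> \<le> \<bar>b (T q) q\<bar>" by simp
      also have "\<dots> \<le> nb * (norm (T q) * norm q)" using b_bnd[of "T q" q] by (simp add: mult.assoc)
      also have "\<dots> \<le> \<bar>nb\<bar> * (norm (T q) * norm q)" by (rule mult_right_mono) auto
      also have "\<dots> = norm (T q) * (\<bar>nb\<bar> * norm q)" by (simp add: mult_ac)
      finally show ?thesis by (rule mult_left_le_imp_le) (use False in simp)
    qed
    have Tlow: "\<beta> * norm q \<le> norm (T q)" for q
    proof (cases "q = 0")
      case True then show ?thesis by simp
    next
      case False
      have "\<beta> \<le> (SUP v\<in>UNIV - {0}. b v q / (norm v * norm q))" by (rule inf_sup[OF False])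
      also have "\<dots> \<le> norm (T q) / norm q"
      proof (rule cSUP_least)
        have "e \<in> (UNIV::'v set) - {0}" using e by simp
        then show "(UNIV::'v set) - {0} \<noteq> {}" by (rule ne_of_mem)
        fix v :: 'v assume "v \<in> UNIV - {0}"
        then have vnz: "v \<noteq> 0" by simp
        have "b v q = inner v (T q)" by (simp add: Tdef)
        also have "\<dots> \<le> norm v * norm (T q)" by (rule norm_cauchy_schwarz)
        finally have "b v q / (norm v * norm q) \<le> norm v * norm (T q) / (norm v * norm q)"
          by (rule divide_right_mono) simp
        also have "\<dots> = norm (T q) / norm q" using vnz by simp
        finally show "b v q / (norm v * norm q) \<le> norm (T q) / norm q" .
      qed
      finally show ?thesis using False by (simp add: pos_le_divide_eq)
    qed
    interpret S: cform "\<lambda>q r. inner (T q) (T r)" "nb\<^sup>2" "\<beta>\<^sup>2"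
    proof (rule cform.intro)
      show "linear (\<lambda>q. inner (T q) (T r))" for r
        by (rule linearI) (simp_all add: Tadd Tscale inner_add_left)
      show "linear (\<lambda>r. inner (T q) (T r))" for q
        by (rule linearI) (simp_all add: Tadd Tscale inner_add_right)
      show "inner (T q) (T r) = inner (T r) (T q)" for q r by (rule inner_commute)
      show "\<bar>inner (T q) (T r)\<bar> \<le> nb\<^sup>2 * norm q * norm r" for q r
      proof -
        have "\<bar>inner (T q) (T r)\<bar> \<le> norm (T q) * norm (T r)" by (rule Cauchy_Schwarz_ineq2)
        also have "\<dots> \<le> (\<bar>nb\<bar> * norm q) * (\<bar>nb\<bar> * norm r)" by (rule mult_mono[OF Tnorm Tnorm]) auto
        also have "\<dots> = nb\<^sup>2 * norm q * norm r" by (simp add: power2_eq_square mult_ac)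
        finally show ?thesis .
      qed
      show "\<beta>\<^sup>2 * (norm q)\<^sup>2 \<le> inner (T q) (T q)" for q
      proof -
        have "(\<beta> * norm q)\<^sup>2 \<le> (norm (T q))\<^sup>2" by (rule power_mono[OF Tlow]) (use beta_pos in simp)
        then show ?thesis by (simp add: power_mult_distrib power2_norm_eq_inner)
      qed
      show "\<beta>\<^sup>2 > 0" using beta_pos by simp
    qed
    obtain q0 where q0: "\<And>r. inner (T r) (T q0) = g r" using S.riesz[OF g_lin] by blast
    define w where "w = T q0"
    have bw: "b w r = g r" for r using q0[of r] Tdef[of w r] unfolding w_def by (simp add: inner_commute)
    have wG: "norm w \<le> G / \<beta>"
    proof (cases "w = 0")
      case True then show ?thesis using G0 beta_pos by simp
    next
      case False
      have "\<bar>g q0\<bar> \<le> G * norm q0" unfolding G_def using onorm[OF g_lin, of q0] by simp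
      then have gq: "g q0 \<le> G * norm q0" by linarith
      have "(norm w)\<^sup>2 = g q0" using q0[of q0] unfolding w_def by (simp add: power2_norm_eq_inner)
      with gq have h: "(norm w)\<^sup>2 \<le> G * norm q0" by simp
      have "\<beta> * (norm w)\<^sup>2 \<le> \<beta> * (G * norm q0)" by (rule mult_left_mono[OF h]) (use beta_pos in simp)
      also have "\<dots> = G * (\<beta> * norm q0)" by (simp add: mult_ac)
      also have "\<dots> \<le> G * norm w" unfolding w_def by (rule mult_left_mono[OF Tlow G0])
      finally have "\<beta> * norm w * norm w \<le> G * norm w" by (simp add: power2_eq_square mult_ac)
      then have "\<beta> * norm w \<le> G" by (rule mult_right_le_imp_le) (use False in simp)
      then show ?thesis using beta_pos by (simp add: pos_le_divide_eq mult.commute)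
    qed
    define uK where "uK = P u"
    define up where "up = u - uK"
    have uKK: "uK \<in> K" unfolding uK_def by (rule PK)
    have uKK': "uK \<in> kernel_b b" using uKK unfolding K_def .
    have buK: "b uK r = 0" for r using uKK' unfolding kernel_b_def by simp
    have aup: "a up k = 0" if "k \<in> K" for k using Ppo[OF that, of u] unfolding up_def uK_def Pp_def .
    have bup: "b up r = g r" for r unfolding up_def using linear_diff[OF b_lin1[of r]] buK[of r] eq2[of r] by simp
    have wup: "w - up \<in> K" unfolding K_def kernel_b_def using linear_diff[OF b_lin1] bup bw by simp
    have aww: "a up up \<le> a w w"
    proof -
      have "a w w = a (up + (w - up)) (up + (w - up))" by simp
      also have "\<dots> = a up up + 2 * a up (w - up) + a (w - up) (w - up)" by (rule A.expand)
      finally show ?thesis using aup[OF wup] A.nonneg[of "w - up"] by simp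
    qed
    have aw_bnd: "a w w \<le> na * (norm w)\<^sup>2" using a_bnd[of w w] by (simp add: power2_eq_square mult_ac)
    have upn: "norm up \<le> \<rho> * (G / \<beta>)"
    proof -
      have "\<alpha> * (norm up)\<^sup>2 \<le> na * (norm w)\<^sup>2" using a_coerc[of up] aww aw_bnd by linarith
      also have "\<dots> \<le> na * (G / \<beta>)\<^sup>2" by (rule mult_left_mono[OF power_mono[OF wG norm_ge_zero] na0])
      finally have "(norm up)\<^sup>2 \<le> (na * (G / \<beta>)\<^sup>2) / \<alpha>" using alpha_pos by (simp add: pos_le_divide_eq mult.commute)
      also have "(na * (G / \<beta>)\<^sup>2) / \<alpha> = (\<rho> * (G / \<beta>))\<^sup>2" unfolding power_mult_distrib rho2 by simp
      finally show ?thesis by (rule power2_le_imp_le) (use rho0 G0 beta_pos in simp)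
    qed
    have uKn: "norm uK \<le> D / \<alpha>0"
    proof -
      have "a uK uK = a u uK" using Porth[OF uKK, of u] unfolding uK_def by (simp add: A.cs)
      also have "\<dots> = f uK" using eq1[of uK] buK[of p] by simp
      also have "\<dots> \<le> D * norm uK" unfolding D_def using ds_bound[OF f_lin uKK] abs_ge_self[of "f uK"] by linarith
      finally have h: "\<alpha>0 * (norm uK)\<^sup>2 \<le> D * norm uK" using a_coerc_K[OF uKK'] by simp
      show ?thesis
      proof (cases "uK = 0")
        case True then show ?thesis using D0 a0pos by simp
      next
        case False
        have "\<alpha>0 * norm uK * norm uK \<le> D * norm uK" using h by (simp add: power2_eq_square mult_ac)
        then have "\<alpha>0 * norm uK \<le> D" by (rule mult_right_le_imp_le) (use False in simp)
        then show ?thesis using a0pos by (simp add: pos_le_divide_eq mult.commute)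
      qed
    qed
    have un: "norm u \<le> D / \<alpha>0 + \<rho> / \<beta> * G"
    proof -
      have "u = uK + up" unfolding up_def by simp
      then have "norm u \<le> norm uK + norm up" by (metis norm_triangle_ineq)
      moreover have "\<rho> * (G / \<beta>) = \<rho> / \<beta> * G" by simp
      ultimately show ?thesis using uKn upn by linarith
    qed
    have aup_bnd: "\<bar>a up v\<bar> \<le> na * norm w * norm v" for v
    proof -
      have av: "a v v \<le> na * (norm v)\<^sup>2" using a_bnd[of v v] by (simp add: power2_eq_square mult_ac)
      have aw': "a up up \<le> na * (norm w)\<^sup>2" using aww aw_bnd by linarith
      have "(a up v)\<^sup>2 \<le> a up up * a v v" by (rule A.cauchy_schwarz)
      also have "\<dots> \<le> (na * (norm w)\<^sup>2) * (na * (norm v)\<^sup>2)"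
        by (rule mult_mono[OF aw' av]) (use na0 A.nonneg[of v] in simp_all)
      also have "\<dots> = (na * norm w * norm v)\<^sup>2" by (simp add: power2_eq_square mult_ac)
      finally have "\<bar>a up v\<bar>\<^sup>2 \<le> (na * norm w * norm v)\<^sup>2" by simp
      then show ?thesis by (rule power2_le_imp_le) (use na0 in simp)
    qed
    have bp: "b v p = f (Pp v) - a up v" for v
    proof -
      have bPv: "b (P v) p = 0" using PK[of v] unfolding K_def kernel_b_def by simp
      have ueq: "u = uK + up" unfolding up_def by simp
      have a1: "a uK (Pp v) = 0" using Ppo[OF uKK, of v] by (simp add: a_sym[of uK "Pp v"])
      have a2: "a up (P v) = 0" using aup[OF PK] .
      have "a u (Pp v) = a (uK + up) (Pp v)" using ueq by simp
      also have "\<dots> = a up (Pp v)" using a1 by (simp add: A.cs)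
      also have "\<dots> = a up v" using a2 unfolding Pp_def by (simp add: A.cs)
      finally have auPp: "a u (Pp v) = a up v" .
      have "b v p = b (P v + Pp v) p" by (simp add: Pp_def)
      also have "\<dots> = b (P v) p + b (Pp v) p" using linear_add[OF b_lin1[of p]] by simp
      also have "\<dots> = b (Pp v) p" using bPv by simp
      also have "\<dots> = f (Pp v) - a u (Pp v)" using eq1[of "Pp v"] by simp
      finally show ?thesis using auPp by simp
    qed
    have Fbound: "\<bar>f (Pp v)\<bar> \<le> F * norm v" for v unfolding FPp using onorm[OF fPp_bl, of v] by simp
    have bpb: "\<bar>b v p\<bar> \<le> (F + na * norm w) * norm v" for v
    proof -
      have "\<bar>b v p\<bar> \<le> \<bar>f (Pp v)\<bar> + \<bar>a up v\<bar>" unfolding bp by (rule abs_triangle_ineq4)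
      moreover have "(F + na * norm w) * norm v = F * norm v + na * norm w * norm v" by (simp add: algebra_simps)
      ultimately show ?thesis using Fbound[of v] aup_bnd[of v] by linarith
    qed
    have pn: "\<beta> * norm p \<le> F + na * norm w"
    proof (cases "p = 0")
      case True then show ?thesis using F0 na0 by simp
    next
      case False
      have "\<beta> \<le> (SUP v\<in>UNIV - {0}. b v p / (norm v * norm p))" by (rule inf_sup[OF False])
      also have "\<dots> \<le> (F + na * norm w) / norm p"
      proof (rule cSUP_least)
        have "e \<in> (UNIV::'v set) - {0}" using e by simp
        then show "(UNIV::'v set) - {0} \<noteq> {}" by (rule ne_of_mem)
        fix v :: 'v assume "v \<in> UNIV - {0}"
        then have vnz: "v \<noteq> 0" by simp
        have "b v p \<le> (F + na * norm w) * norm v" using bpb[of v] by linarith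
        then have "b v p / (norm v * norm p) \<le> (F + na * norm w) * norm v / (norm v * norm p)"
          by (rule divide_right_mono) simp
        also have "\<dots> = (F + na * norm w) / norm p" using vnz by simp
        finally show "b v p / (norm v * norm p) \<le> (F + na * norm w) / norm p" .
      qed
      finally show ?thesis using False by (simp add: pos_le_divide_eq)
    qed
    have pn2: "norm p \<le> F / \<beta> + na / \<beta>\<^sup>2 * G"
    proof -
      have "\<beta> * norm p \<le> F + na * (G / \<beta>)" using pn mult_left_mono[OF wG na0] by linarith
      then have "norm p \<le> (F + na * (G / \<beta>)) / \<beta>" using beta_pos by (simp add: pos_le_divide_eq mult.commute)
      also have "\<dots> = F / \<beta> + na / \<beta>\<^sup>2 * G" using beta_pos by (simp add: field_simps power2_eq_square)
      finally show ?thesis .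
    qed
    have th3: "F / \<beta> + na / \<beta>\<^sup>2 * G \<le> \<rho> / \<beta> * Dp + na / \<beta>\<^sup>2 * G"
    proof -
      have "F / \<beta> \<le> (\<rho> * Dp) / \<beta>" by (rule divide_right_mono[OF third]) (use beta_pos in simp)
      then show ?thesis by simp
    qed
    have "norm u \<le> D / \<alpha>0 + \<rho> / \<beta> * G \<and> norm p \<le> F / \<beta> + na / \<beta>\<^sup>2 * G
      \<and> F / \<beta> + na / \<beta>\<^sup>2 * G \<le> \<rho> / \<beta> * Dp + na / \<beta>\<^sup>2 * G"
      using un pn2 th3 by blast
    then show ?thesis unfolding D_def F_def G_def Dp_def \<rho>_def K_def .
  qed
qed

end
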